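(* If the NNF DAG of $F$ is in wDNNF, then for every $j\in\{1,\ldots,n\}$ the implication $$\hat F(\mathbf{1}^j,\mathbf{X}_{j+1}^n,\mathbf{1}^j,\overline{\mathbf{X}}_{j+1}^n,\mathbf{Y})\Rightarrow \hat F(\mathbf{1}^{j-1}0,\mathbf{X}_{j+1}^n,\mathbf{1}^{j-1}1,\overline{\mathbf{X}}_{j+1}^n,\mathbf{Y})\vee \hat F(\mathbf{1}^{j-1}1,\mathbf{X}_{j+1}^n,\mathbf{1}^{j-1}0,\overline{\mathbf{X}}_{j+1}^n,\mathbf{Y})$$ is valid (for all values of $\mathbf{X}_{j+1}^n,\overline{\mathbf{X}}_{j+1}^n,\mathbf{Y}$).
   Context: $\mathbf{X}=(x_1,\ldots,x_n)$ are outputs and $\mathbf{Y}=(y_1,\ldots,y_m)$ inputs; $\mathbf{X}_i^j=(x_i,\ldots,x_j)$. An NNF formula uses only $\wedge,\vee$ and negations applied to variables, represented as a rooted DAG with $\wedge/\vee$ internal nodes and literal leaves. For an internal node representing subformula $\alpha$, $\mathrm{lits}(\alpha)$ is the set of literals labeling leaves having a path to that node. The NNF DAG is in wDNNF if for every $\wedge$-node representing $\alpha=\alpha_1\wedge\cdots\wedge\alpha_k$ there is no literal $l$ and distinct $p,q$ with $l\in\mathrm{lits}(\alpha_p)$ and $\neg l\in\mathrm{lits}(\alpha_q)$. $\hat F(\mathbf{X},\overline{\mathbf{X}},\mathbf{Y})$ is obtained from the NNF DAG of $F$ by replacing each leaf $\neg x_i$ ($x_i\in\mathbf{X}$) by a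 fresh variable $\overline{x_i}$. For length-$j$ bit-vectors $\mathbf{b},\mathbf{c}$, $\hat F(\mathbf{b},\mathbf{X}_{j+1}^n,\mathbf{c},\overline{\mathbf{X}}_{j+1}^n,\mathbf{Y})$ sets $(x_1,\ldots,x_j):=\mathbf{b}$ and $(\overline{x_1},\ldots,\overline{x_j}):=\mathbf{c}$. $\mathbf{1}^{j-1}0$ is $j-1$ ones followed by $0$; $\mathbf{1}^{j-1}1=\mathbf{1}^j$ is all ones. *)

theory Defs
  imports Main
begin

(* Variables: output variables x_i (X i) and input variables y_k (Y k). *)
datatype var = X nat | Y nat

(* A literal is a polarity (True = positive, False = negated) and a variable. *)
type_synonym lit = "bool \<times> var"

(* NNF formulas; a DAG is represented by its tree unfolding (sharing does not affect
   semantics, lits, or the wDNNF condition). And/Or nodes have arbitrary arity. *)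
datatype nnf = Lit bool var | And "nnf list" | Or "nnf list"

fun neg_lit :: "lit \<Rightarrow> lit" where
  "neg_lit (p, v) = (\<not> p, v)"

fun lits :: "nnf \<Rightarrow> lit set" where
  "lits (Lit p v) = {(p, v)}"
| "lits (And fs) = (\<Union>f\<in>set fs. lits f)"
| "lits (Or fs) = (\<Union>f\<in>set fs. lits f)"

definition and_ok :: "nnf list \<Rightarrow> bool" where
  "and_ok fs \<longleftrightarrow> \<not> (\<exists>l p q. p < length fs \<and> q < length fs \<and> p \<noteq> q \<and>
                         l \<in> lits (fs ! p) \<and> neg_lit l \<in> lits (fs ! q))"

fun wDNNF :: "nnf \<Rightarrow> bool" where
  "wDNNF (Lit p v) = True"
| "wDNNF (And fs) = (and_ok fs \<and> (\<forall>f\<in>set fs. wDNNF f))"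
| "wDNNF (Or fs) = (\<forall>f\<in>set fs. wDNNF f)"

fun xvars :: "nnf \<Rightarrow> nat set" where
  "xvars (Lit p (X i)) = {i}"
| "xvars (Lit p (Y k)) = {}"
| "xvars (And fs) = (\<Union>f\<in>set fs. xvars f)"
| "xvars (Or fs) = (\<Union>f\<in>set fs. xvars f)"

(* Evaluation of \<hat>F(X, Xbar, Y): a positive leaf x_i reads xs i, a leaf \<not>x_i is
   replaced by the fresh variable xbar_i and reads xb i; input literals as usual. *)
fun eval_hat :: "(nat \<Rightarrow> bool) \<Rightarrow> (nat \<Rightarrow> bool) \<Rightarrow> (nat \<Rightarrow> bool) \<Rightarrow> nnf \<Rightarrow> bool" where
  "eval_hat xs xb ys (Lit True (X i)) = xs i"
| "eval_hat xs xb ys (Lit False (X i)) = xb i"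
| "eval_hat xs xb ys (Lit p (Y k)) = (if p then ys k else \<not> ys k)"
| "eval_hat xs xb ys (And fs) = (\<forall>f\<in>set fs. eval_hat xs xb ys f)"
| "eval_hat xs xb ys (Or fs) = (\<exists>f\<in>set fs. eval_hat xs xb ys f)"

end

theory Submission
  imports Defs
begin

lemma indep_xs:
  "(True, X j) \<notin> lits F \<Longrightarrow> (\<And>i. i \<noteq> j \<Longrightarrow> xs i = xs' i) \<Longrightarrow>
   eval_hat xs xb ys F = eval_hat xs' xb ys F"
  by (induction xs xb ys F rule: eval_hat.induct) auto

lemma indep_xb:
  "(False, X j) \<notin> lits F \<Longrightarrow> (\<And>i. i \<noteq> j \<Longrightarrow> xb i = xb' i) \<Longrightarrow>
   eval_hat xs xb ys F = eval_hat xs xb' ys F"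
  by (induction xs xb ys F rule: eval_hat.induct) auto

lemma key:
  "wDNNF F \<Longrightarrow> eval_hat (xs(j := True)) (xb(j := True)) ys F \<Longrightarrow>
   eval_hat (xs(j := False)) (xb(j := True)) ys F \<or>
   eval_hat (xs(j := True)) (xb(j := False)) ys F"
proof (induction F)
  case (Lit p v)
  then show ?case by (cases p; cases v) auto
next
  case (Or fs)
  then obtain c where c: "c \<in> set fs" "eval_hat (xs(j := True)) (xb(j := True)) ys c"
    by (simp only: eval_hat.simps) blast
  have w: "wDNNF c" using Or.prems(1) c(1) by simp
  have "eval_hat (xs(j := False)) (xb(j := True)) ys c \<or>
   eval_hat (xs(j := True)) (xb(j := False)) ys c" by (rule Or.IH[OF c(1) w c(2)])
  with c show ?case by (simp only: eval_hat.simps) blast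
next
  case (And fs)
  let ?TT = "eval_hat (xs(j := True)) (xb(j := True)) ys"
  let ?FT = "eval_hat (xs(j := False)) (xb(j := True)) ys"
  let ?TF = "eval_hat (xs(j := True)) (xb(j := False)) ys"
  have all: "\<forall>c\<in>set fs. ?TT c" using And.prems(2) by (simp only: eval_hat.simps)
  have ok: "and_ok fs" using And.prems by simp
  show ?case
  proof (cases "\<forall>c\<in>set fs. (True, X j) \<notin> lits c")
    case True
    have "\<forall>c\<in>set fs. ?FT c"
    proof
      fix c assume c: "c \<in> set fs"
      have "?TT c = ?FT c" by (rule indep_xs[of j]) (use True c in auto)
      thus "?FT c" using all c by simp
    qed
    thus ?thesis by (simp only: eval_hat.simps) blast
  next
    case nT: False
    then obtain p where p: "p < length fs" "(True, X j) \<in> lits (fs ! p)"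
      by (auto simp: in_set_conv_nth)
    show ?thesis
    proof (cases "\<forall>c\<in>set fs. (False, X j) \<notin> lits c")
      case True
      have "\<forall>c\<in>set fs. ?TF c"
      proof
        fix c assume c: "c \<in> set fs"
        have "?TT c = ?TF c" by (rule indep_xb[of j]) (use True c in auto)
        thus "?TF c" using all c by simp
      qed
      thus ?thesis by (simp only: eval_hat.simps) blast
    next
      case False
      then obtain q where q: "q < length fs" "(False, X j) \<in> lits (fs ! q)"
        by (auto simp: in_set_conv_nth)
      have bad: "\<And>a b. a < length fs \<Longrightarrow> b < length fs \<Longrightarrow> a \<noteq> b \<Longrightarrow>
           (True, X j) \<in> lits (fs ! a) \<Longrightarrow> (False, X j) \<in> lits (fs ! b) \<Longrightarrow> False"
      proof -
        fix a b assume h: "a < length fs" "b < length fs" "a \<noteq> b"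
          "(True, X j) \<in> lits (fs ! a)" "(False, X j) \<in> lits (fs ! b)"
        have "neg_lit (True, X j) = (False, X j)" by simp
        with h have "\<exists>l p q. p < length fs \<and> q < length fs \<and> p \<noteq> q \<and>
                         l \<in> lits (fs ! p) \<and> neg_lit l \<in> lits (fs ! q)" by metis
        with ok show False unfolding and_ok_def by blast
      qed
      have pq: "p = q" using bad p q by blast
      have other: "\<And>r. r < length fs \<Longrightarrow> r \<noteq> p \<Longrightarrow>
          (True, X j) \<notin> lits (fs ! r) \<and> (False, X j) \<notin> lits (fs ! r)"
        using bad p q pq by blast
      have cp: "fs ! p \<in> set fs" using p by simp
      have ih: "?FT (fs ! p) \<or> ?TF (fs ! p)"
      proof -
        have w: "wDNNF (fs ! p)" using And.prems(1) cp by simp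
        have t: "?TT (fs ! p)" using all cp by blast
        show ?thesis by (rule And.IH[OF cp w t])
      qed
      have oFT: "\<And>r. r < length fs \<Longrightarrow> r \<noteq> p \<Longrightarrow> ?FT (fs ! r)"
      proof -
        fix r assume r: "r < length fs" "r \<noteq> p"
        have "?TT (fs!r) = ?FT (fs!r)" by (rule indep_xs[of j]) (use other[OF r] in auto)
        thus "?FT (fs!r)" using all r by simp
      qed
      have oTF: "\<And>r. r < length fs \<Longrightarrow> r \<noteq> p \<Longrightarrow> ?TF (fs ! r)"
      proof -
        fix r assume r: "r < length fs" "r \<noteq> p"
        have "?TT (fs!r) = ?TF (fs!r)" by (rule indep_xb[of j]) (use other[OF r] in auto)
        thus "?TF (fs!r)" using all r by simp
      qed
      from ih show ?thesis
      proof
        assume h: "?FT (fs ! p)"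
        have "\<forall>r<length fs. ?FT (fs ! r)" proof (intro allI impI)
          fix r assume "r < length fs" thus "?FT (fs ! r)" using h oFT by (cases "r = p") simp_all
        qed
        hence "\<forall>c\<in>set fs. ?FT c" by (simp only: all_set_conv_all_nth)
        thus ?thesis by (simp only: eval_hat.simps) blast
      next
        assume h: "?TF (fs ! p)"
        have "\<forall>r<length fs. ?TF (fs ! r)" proof (intro allI impI)
          fix r assume "r < length fs" thus "?TF (fs ! r)" using h oTF by (cases "r = p") simp_all
        qed
        hence "\<forall>c\<in>set fs. ?TF c" by (simp only: all_set_conv_all_nth)
        thus ?thesis by (simp only: eval_hat.simps) blast
      qed
    qed
  qed
qed

theorem mainTheorem8:
  fixes F :: nnf and n j :: nat
  assumes "xvars F \<subseteq> {1..n}"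
    and "wDNNF F"
    and "j \<in> {1..n}"
  shows "\<forall>xs xb ys. (\<forall>i. 1 \<le> i \<and> i < j \<longrightarrow> xs i \<and> xb i) \<longrightarrow>
           eval_hat (xs(j := True)) (xb(j := True)) ys F \<longrightarrow>
           eval_hat (xs(j := False)) (xb(j := True)) ys F \<or>
           eval_hat (xs(j := True)) (xb(j := False)) ys F"
  using key[OF assms(2)] by blast

end
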